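(* Let $(X_t)_{t\geq0}$ be a right-continuous stochastic process on a filtered probability space $(\Omega,\mathscr F,\mathbb P;(\mathscr F_t)_{t\geq0})$. Suppose that for some $Y\in L^1(\Omega)$ and $A>0$, for every $t\geq0$, $|X_t|\leq Y$ and $\mathbb E(X_t\,|\,\mathscr F_t)\leq A$ $\mathbb P$-a.s. Then for any finite stopping time $\tau$, $\mathbb E(X_\tau\,|\,\mathscr F_\tau)\leq A$ $\mathbb P$-a.s. *)

theory Defs
  imports "HOL-Probability.Probability"
begin

(* The filtration (F_t)_{t>=0} is given on t >= 0 only; to use the library's
   stopping_time / filtration.pre_sigma (which quantify over all real t),
   we extend it to negative times constantly: F_t := F_0 for t < 0. *)
definition ext_filtration :: "(real \<Rightarrow> 'a measure) \<Rightarrow> real \<Rightarrow> 'a measure" where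
  "ext_filtration F t = F (max 0 t)"

end

theory Submission
  imports Defs
begin

lemma ce_ind_eq:
  assumes H: "sigma_finite_subalgebra M H" and fin: "finite_measure M"
    and Z: "integrable M Z" and B: "B \<in> sets H"
  shows "(\<integral>x. indicator B x * (Z x - c) \<partial>M) = (\<integral>x. indicator B x * (real_cond_exp M H Z x - c) \<partial>M)"
proof -
  interpret sigma_finite_subalgebra M H by (rule H)
  interpret finite_measure M by (rule fin)
  have BM: "B \<in> sets M" using B subalg unfolding subalgebra_def by auto
  have i1: "integrable M (\<lambda>x. indicator B x * Z x)" using integrable_mult_indicator[OF BM Z] by simp
  have i2: "integrable M (\<lambda>x. indicator B x * c)" using integrable_mult_indicator[OF BM integrable_const[of c]] by simp
  have i3: "integrable M (\<lambda>x. indicator B x * real_cond_exp M H Z x)"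
    using integrable_mult_indicator[OF BM real_cond_exp_int(1)[OF Z]] by simp
  have bmH: "indicator B \<in> borel_measurable H" using B by simp
  have e: "(\<integral>x. indicator B x * real_cond_exp M H Z x \<partial>M) = (\<integral>x. indicator B x * Z x \<partial>M)"
    by (rule real_cond_exp_intg(2)[OF i1 bmH borel_measurable_integrable[OF Z]])
  have "(\<integral>x. indicator B x * (Z x - c) \<partial>M) = (\<integral>x. indicator B x * Z x - indicator B x * c \<partial>M)"
    by (simp add: right_diff_distrib)
  also have "\<dots> = (\<integral>x. indicator B x * Z x \<partial>M) - (\<integral>x. indicator B x * c \<partial>M)"
    using i1 i2 by (rule Bochner_Integration.integral_diff)
  also have "\<dots> = (\<integral>x. indicator B x * real_cond_exp M H Z x \<partial>M) - (\<integral>x. indicator B x * c \<partial>M)"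
    using e by simp
  also have "\<dots> = (\<integral>x. indicator B x * real_cond_exp M H Z x - indicator B x * c \<partial>M)"
    using i3 i2 by (rule Bochner_Integration.integral_diff[symmetric])
  also have "\<dots> = (\<integral>x. indicator B x * (real_cond_exp M H Z x - c) \<partial>M)"
    by (simp add: right_diff_distrib)
  finally show ?thesis .
qed

lemma ce_le_imp:
  assumes H: "sigma_finite_subalgebra M H" and fin: "finite_measure M"
    and Z: "integrable M Z" and B: "B \<in> sets H"
    and le: "AE x in M. real_cond_exp M H Z x \<le> c"
  shows "(\<integral>x. indicator B x * (Z x - c) \<partial>M) \<le> 0"
proof -
  interpret sigma_finite_subalgebra M H by (rule H)
  interpret finite_measure M by (rule fin)
  have BM: "B \<in> sets M" using B subalg unfolding subalgebra_def by auto
  have i: "integrable M (\<lambda>x. indicator B x * (real_cond_exp M H Z x - c))"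
    using integrable_mult_indicator[OF BM Bochner_Integration.integrable_diff[OF real_cond_exp_int(1)[OF Z] integrable_const[of c]]] by simp
  have "(\<integral>x. indicator B x * (real_cond_exp M H Z x - c) \<partial>M) \<le> (\<integral>x. 0 \<partial>M)"
    using i le by (intro integral_mono_AE) (auto elim!: eventually_mono simp: indicator_def)
  then show ?thesis using ce_ind_eq[OF H fin Z B, of c] by simp
qed

lemma ce_le_from:
  assumes H: "sigma_finite_subalgebra M H" and fin: "finite_measure M"
    and Z: "integrable M Z"
    and all: "\<And>B. B \<in> sets H \<Longrightarrow> (\<integral>x. indicator B x * (Z x - c) \<partial>M) \<le> 0"
  shows "AE x in M. real_cond_exp M H Z x \<le> c"
proof -
  interpret sigma_finite_subalgebra M H by (rule H)
  interpret finite_measure M by (rule fin)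
  define g where "g = real_cond_exp M H Z"
  define B where "B = {x\<in>space M. c < g x}"
  have gH: "g \<in> borel_measurable H" unfolding g_def by simp
  have sp: "space H = space M" using subalg unfolding subalgebra_def by auto
  have "{x\<in>space H. c < g x} \<in> sets H" using gH by measurable
  then have BH: "B \<in> sets H" unfolding B_def sp .
  have BM: "B \<in> sets M" using BH subalg unfolding subalgebra_def by auto
  have i: "integrable M (\<lambda>x. indicator B x * (g x - c))"
    unfolding g_def
    using integrable_mult_indicator[OF BM Bochner_Integration.integrable_diff[OF real_cond_exp_int(1)[OF Z] integrable_const[of c]]] by simp
  have nn: "\<And>x. 0 \<le> indicator B x * (g x - c)" by (auto simp: indicator_def B_def)
  have "(\<integral>x. indicator B x * (g x - c) \<partial>M) \<le> 0"
    using all[OF BH] ce_ind_eq[OF H fin Z BH, of c] unfolding g_def by simp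
  moreover have "0 \<le> (\<integral>x. indicator B x * (g x - c) \<partial>M)" using nn by simp
  ultimately have "(\<integral>x. indicator B x * (g x - c) \<partial>M) = 0" by simp
  then have "AE x in M. indicator B x * (g x - c) = 0"
    using integral_nonneg_eq_0_iff_AE[OF i] nn by simp
  with AE_space show ?thesis unfolding g_def[symmetric]
    by eventually_elim (auto simp: B_def indicator_def not_less split: if_splits)
qed


lemma nat_ceiling_eq_iff:
  fixes x :: real assumes "0 \<le> x"
  shows "nat \<lceil>x\<rceil> = k \<longleftrightarrow> real k - 1 < x \<and> x \<le> real k"
proof -
  have "nat \<lceil>x\<rceil> = k \<longleftrightarrow> \<lceil>x\<rceil> = int k" using assms by auto
  also have "\<dots> \<longleftrightarrow> real k - 1 < x \<and> x \<le> real k" by (simp add: ceiling_eq_iff)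
  finally show ?thesis .
qed

lemma rcont_seq:
  fixes f :: "real \<Rightarrow> real"
  assumes c: "continuous (at_right t) f" and ge: "\<And>n. t \<le> s n" and lim: "s \<longlonglongrightarrow> t"
  shows "(\<lambda>n. f (s n)) \<longlonglongrightarrow> f t"
proof -
  have "continuous (at t within {t..}) f" using c by (simp add: at_within_Ici_at_right)
  then show ?thesis unfolding continuous_within_sequentially using ge lim by (auto simp: o_def)
qed


theorem lemma4p4:
  fixes M :: "'a measure" and F :: "real \<Rightarrow> 'a measure"
    and X :: "real \<Rightarrow> 'a \<Rightarrow> real" and Y :: "'a \<Rightarrow> real" and A :: real
    and \<tau> :: "'a \<Rightarrow> real"
  assumes prob: "prob_space M"
    and filt_sub: "\<And>t. 0 \<le> t \<Longrightarrow> subalgebra M (F t)"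
    and filt_mono: "\<And>s t. 0 \<le> s \<Longrightarrow> s \<le> t \<Longrightarrow> sets (F s) \<subseteq> sets (F t)"
    and X_meas: "\<And>t. 0 \<le> t \<Longrightarrow> X t \<in> borel_measurable M"
    and X_rcont: "\<And>\<omega> t. \<omega> \<in> space M \<Longrightarrow> 0 \<le> t \<Longrightarrow> continuous (at_right t) (\<lambda>s. X s \<omega>)"
    and Y_int: "integrable M Y"
    and A_pos: "A > 0"
    and X_bound: "\<And>t. 0 \<le> t \<Longrightarrow> AE \<omega> in M. \<bar>X t \<omega>\<bar> \<le> Y \<omega>"
    and X_ce: "\<And>t. 0 \<le> t \<Longrightarrow> AE \<omega> in M. real_cond_exp M (F t) (X t) \<omega> \<le> A"
    and tau_nonneg: "\<And>\<omega>. \<omega> \<in> space M \<Longrightarrow> 0 \<le> \<tau> \<omega>"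
    and tau_stop: "stopping_time (ext_filtration F) \<tau>"
  shows "AE \<omega> in M. real_cond_exp M (filtration.pre_sigma (space M) (ext_filtration F) \<tau>)
                        (\<lambda>\<omega>'. X (\<tau> \<omega>') \<omega>') \<omega> \<le> A"
proof -
  interpret P: prob_space M by (rule prob)
  have fin: "finite_measure M" using prob by (simp add: prob_space_def)
  define Fe where "Fe = ext_filtration F"
  have Fe_eq: "Fe t = F t" if "0 \<le> t" for t using that by (simp add: Fe_def ext_filtration_def)
  have Fe_sub: "subalgebra M (Fe t)" for t using filt_sub[of "max 0 t"] by (simp add: Fe_def ext_filtration_def)
  have Fe_space: "space (Fe t) = space M" for t using Fe_sub[of t] by (simp add: subalgebra_def)
  have Fe_sets: "sets (Fe t) \<subseteq> sets M" for t using Fe_sub[of t] by (simp add: subalgebra_def)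
  interpret filtration "space M" Fe
  proof
    fix i j :: real assume "i \<le> j"
    then show "sets (Fe i) \<le> sets (Fe j)"
      using filt_mono[of "max 0 i" "max 0 j"] by (simp add: Fe_def ext_filtration_def)
  qed (rule Fe_space)
  have T: "stopping_time Fe \<tau>" using tau_stop by (simp add: Fe_def)
  define G where "G = pre_sigma \<tau>"
  have G_sets: "sets G = {B. \<forall>t. {\<omega>\<in>B. \<tau> \<omega> \<le> t} \<in> sets (Fe t)}"
    unfolding G_def by (rule sets_pre_sigma[OF T])
  have G_space: "space G = space M" unfolding G_def by (rule space_pre_sigma)
  have G_in_M: "B \<in> sets M" if B: "B \<in> sets G" for B
  proof -
    have Bs: "B \<subseteq> space M" using sets.sets_into_space[OF B] G_space by simp
    have "B = (\<Union>n::nat. {\<omega>\<in>B. \<tau> \<omega> \<le> real n})"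
      using Bs by (auto intro: real_arch_simple)
    also have "\<dots> \<in> sets M"
      using B G_sets Fe_sets by (intro sets.countable_UN) blast
    finally show ?thesis .
  qed
  have G_sub: "subalgebra M G" using G_in_M G_space by (auto simp: subalgebra_def)
  have G_sf: "sigma_finite_subalgebra M G"
    by (intro finite_measure_subalgebra_is_sigma_finite finite_measure_subalgebra.intro
        finite_measure_subalgebra_axioms.intro fin G_sub)
  have F_sf: "sigma_finite_subalgebra M (F t)" if "0 \<le> t" for t
    by (intro finite_measure_subalgebra_is_sigma_finite finite_measure_subalgebra.intro
        finite_measure_subalgebra_axioms.intro fin filt_sub that)
  have X_int: "integrable M (X t)" if "0 \<le> t" for t
    by (rule Bochner_Integration.integrable_bound[OF Y_int X_meas[OF that]])
       (use X_bound[OF that] in \<open>auto elim!: eventually_mono\<close>)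
  define D where "D n k = real k / 2 ^ n" for n k :: nat
  have D_nonneg: "0 \<le> D n k" for n k by (simp add: D_def)
  define C where "C n k = {\<omega>\<in>space M. nat \<lceil>2 ^ n * \<tau> \<omega>\<rceil> = k}" for n k :: nat
  have C_eq: "C n k = {\<omega>\<in>space M. \<tau> \<omega> \<le> D n k} - {\<omega>\<in>space M. \<tau> \<omega> \<le> D n k - 1 / 2 ^ n}" for n k
  proof -
    have "nat \<lceil>2 ^ n * \<tau> \<omega>\<rceil> = k \<longleftrightarrow> \<tau> \<omega> \<le> D n k \<and> \<not> \<tau> \<omega> \<le> D n k - 1 / 2 ^ n"
      if "\<omega> \<in> space M" for \<omega>
      using tau_nonneg[OF that]
      by (subst nat_ceiling_eq_iff) (auto simp: D_def field_simps)
    then show ?thesis unfolding C_def by auto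
  qed
  have BC_F: "B \<inter> C n k \<in> sets (F (D n k))" if B: "B \<in> sets G" for B n k
  proof -
    have Bs: "B \<subseteq> space M" using sets.sets_into_space[OF B] G_space by simp
    have "B \<inter> C n k = {\<omega>\<in>B. \<tau> \<omega> \<le> D n k} - {\<omega>\<in>space (Fe (D n k)). \<tau> \<omega> \<le> D n k - 1 / 2 ^ n}"
      using Bs unfolding C_eq Fe_space by auto
    also have "\<dots> \<in> sets (Fe (D n k))"
    proof (rule sets.Diff)
      show "{\<omega>\<in>B. \<tau> \<omega> \<le> D n k} \<in> sets (Fe (D n k))" using B G_sets by blast
      have "Measurable.pred (Fe (D n k)) (\<lambda>\<omega>. \<tau> \<omega> \<le> D n k - 1 / 2 ^ n)"
        by (rule stopping_time_le_const[OF T]) simp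
      then show "{\<omega>\<in>space (Fe (D n k)). \<tau> \<omega> \<le> D n k - 1 / 2 ^ n} \<in> sets (Fe (D n k))"
        by (simp add: pred_def)
    qed
    finally show ?thesis using Fe_eq[OF D_nonneg] by simp
  qed
  have spG: "space M \<in> sets G" using sets.top[of G] G_space by simp
  have C_M: "B \<inter> C n k \<in> sets M" if "B \<in> sets G" for B n k
    using BC_F[OF that, of n k] filt_sub[OF D_nonneg[of n k]] by (auto simp: subalgebra_def)
  define W where "W B c n = (\<lambda>\<omega>. \<Sum>k\<le>n * 2 ^ n. indicator (B \<inter> C n k) \<omega> * (X (D n k) \<omega> - c))"
    for B c n
  have W_eq: "W B c n \<omega> = (if nat \<lceil>2 ^ n * \<tau> \<omega>\<rceil> \<le> n * 2 ^ n
      then indicator B \<omega> * (X (D n (nat \<lceil>2 ^ n * \<tau> \<omega>\<rceil>)) \<omega> - c) else 0)"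
    if "\<omega> \<in> space M" for B c n \<omega>
  proof -
    have "indicator (B \<inter> C n k) \<omega> * (X (D n k) \<omega> - c) =
      (if nat \<lceil>2 ^ n * \<tau> \<omega>\<rceil> = k then indicator B \<omega> * (X (D n k) \<omega> - c) else 0)" for k
      using that by (auto simp: C_def indicator_def)
    then show ?thesis unfolding W_def by simp
  qed
  have W_lim: "(\<lambda>n. W B c n \<omega>) \<longlonglongrightarrow> indicator B \<omega> * (X (\<tau> \<omega>) \<omega> - c)"
    if om: "\<omega> \<in> space M" for B c \<omega>
  proof -
    have t0: "0 \<le> \<tau> \<omega>" by (rule tau_nonneg[OF om])
    define s where "s n = real_of_int \<lceil>2 ^ n * \<tau> \<omega>\<rceil> / 2 ^ n" for n :: nat
    have cge: "0 \<le> \<lceil>2 ^ n * \<tau> \<omega>\<rceil>" for n :: nat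
    proof -
      have "0 \<le> 2 ^ n * \<tau> \<omega>" using t0 by simp
      then show ?thesis by (subst zero_le_ceiling) linarith
    qed
    have Ds: "D n (nat \<lceil>2 ^ n * \<tau> \<omega>\<rceil>) = s n" for n
      using cge[of n] by (simp add: D_def s_def)
    have s_ge: "\<tau> \<omega> \<le> s n" for n
    proof -
      have "2 ^ n * \<tau> \<omega> \<le> real_of_int \<lceil>2 ^ n * \<tau> \<omega>\<rceil>" by (rule le_of_int_ceiling)
      then show ?thesis by (simp add: s_def field_simps)
    qed
    have s_le: "s n \<le> \<tau> \<omega> + (1/2) ^ n" for n
    proof -
      have "real_of_int \<lceil>2 ^ n * \<tau> \<omega>\<rceil> \<le> 2 ^ n * \<tau> \<omega> + 1" by (rule of_int_ceiling_le_add_one)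
      then show ?thesis by (simp add: s_def field_simps power_one_over)
    qed
    have "(\<lambda>n. (1/2::real) ^ n) \<longlonglongrightarrow> 0" by (rule LIMSEQ_realpow_zero) auto
    then have l2: "(\<lambda>n. \<tau> \<omega> + (1/2::real) ^ n) \<longlonglongrightarrow> \<tau> \<omega> + 0"
      by (rule tendsto_add[OF tendsto_const])
    have ev1: "eventually (\<lambda>n. \<tau> \<omega> \<le> s n) sequentially" using s_ge by simp
    have ev2: "eventually (\<lambda>n. s n \<le> \<tau> \<omega> + (1/2) ^ n) sequentially" using s_le by simp
    have s_lim: "s \<longlonglongrightarrow> \<tau> \<omega>"
      using tendsto_sandwich[OF ev1 ev2 tendsto_const] l2 by simp
    have Xlim: "(\<lambda>n. X (s n) \<omega>) \<longlonglongrightarrow> X (\<tau> \<omega>) \<omega>"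
      by (rule rcont_seq[OF X_rcont[OF om t0] s_ge s_lim])
    obtain N :: nat where N: "\<tau> \<omega> \<le> real N" using real_arch_simple by blast
    have ev: "eventually (\<lambda>n. indicator B \<omega> * (X (s n) \<omega> - c) = W B c n \<omega>) sequentially"
      unfolding eventually_sequentially
    proof (intro exI allI impI)
      fix n assume "N \<le> n"
      then have "\<tau> \<omega> \<le> real n" using N by simp
      then have "2 ^ n * \<tau> \<omega> \<le> 2 ^ n * real n" by (intro mult_left_mono) auto
      then have "\<lceil>2 ^ n * \<tau> \<omega>\<rceil> \<le> int (n * 2 ^ n)" by (simp add: ceiling_le_iff mult.commute)
      then have "nat \<lceil>2 ^ n * \<tau> \<omega>\<rceil> \<le> n * 2 ^ n" by (simp only: nat_le_iff)
      then show "indicator B \<omega> * (X (s n) \<omega> - c) = W B c n \<omega>"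
        using W_eq[OF om, of B c n] Ds[of n] by simp
    qed
    have "(\<lambda>n. indicator B \<omega> * (X (s n) \<omega> - c)) \<longlonglongrightarrow> indicator B \<omega> * (X (\<tau> \<omega>) \<omega> - c)"
      by (intro tendsto_mult_left tendsto_diff Xlim tendsto_const)
    then show ?thesis using ev by (rule Lim_transform_eventually)
  qed
  have Xb_all: "AE \<omega> in M. \<forall>n k. \<bar>X (D n k) \<omega>\<bar> \<le> Y \<omega>"
    unfolding AE_all_countable using X_bound[OF D_nonneg] by blast
  have W_bound: "AE \<omega> in M. norm (W B c n \<omega>) \<le> Y \<omega> + \<bar>c\<bar>" for B c n
    using Xb_all AE_space
  proof eventually_elim
    case (elim \<omega>)
    have Y0: "0 \<le> Y \<omega>" using elim(1)[rule_format, of 0 0] by linarith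
    have h: "\<bar>X d \<omega> - c\<bar> \<le> Y \<omega> + \<bar>c\<bar>" if "\<bar>X d \<omega>\<bar> \<le> Y \<omega>" for d
      using that by linarith
    show ?case using W_eq[OF elim(2), of B c n] h elim(1) Y0
      by (auto simp: indicator_def)
  qed
  have W_meas: "W B c n \<in> borel_measurable M" if B: "B \<in> sets G" for B c n
    unfolding W_def
    by (intro borel_measurable_sum borel_measurable_times borel_measurable_indicator C_M[OF B]
        borel_measurable_diff X_meas D_nonneg borel_measurable_const)
  define xt where "xt = (\<lambda>\<omega>. X (\<tau> \<omega>) \<omega>)"
  have lim0: "(\<lambda>n. W (space M) 0 n \<omega>) \<longlonglongrightarrow> xt \<omega>" if "\<omega> \<in> space M" for \<omega>
    using W_lim[OF that, of "space M" 0] that by (simp add: xt_def)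
  have xt_meas: "xt \<in> borel_measurable M"
    by (rule borel_measurable_LIMSEQ_real[where u="W (space M) 0"]) (auto intro: lim0 W_meas spG)
  have wint: "integrable M (\<lambda>\<omega>. Y \<omega> + \<bar>c\<bar>)" for c
    by (intro Bochner_Integration.integrable_add Y_int P.integrable_const)
  have xt_int: "integrable M xt"
    by (rule integrable_dominated_convergence[where s="W (space M) 0" and w="\<lambda>\<omega>. Y \<omega> + \<bar>0\<bar>"])
       (use W_bound[of "space M" 0] Y_int in \<open>auto intro: xt_meas W_meas spG wint AE_I2 lim0\<close>)
  have main: "(\<integral>\<omega>. indicator B \<omega> * (xt \<omega> - A) \<partial>M) \<le> 0" if B: "B \<in> sets G" for B
  proof -
    have BM: "B \<in> sets M" by (rule G_in_M[OF B])
    have fm: "(\<lambda>\<omega>. indicator B \<omega> * (xt \<omega> - A)) \<in> borel_measurable M"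
      by (intro borel_measurable_times borel_measurable_indicator borel_measurable_diff xt_meas BM
          borel_measurable_const)
    have lim: "(\<lambda>n. integral\<^sup>L M (W B A n)) \<longlonglongrightarrow> (\<integral>\<omega>. indicator B \<omega> * (xt \<omega> - A) \<partial>M)"
      by (rule integral_dominated_convergence[where w="\<lambda>\<omega>. Y \<omega> + \<bar>A\<bar>"])
         (use fm W_bound[of B A] in \<open>auto intro: W_meas B wint AE_I2 simp: xt_def W_lim\<close>)
    have each: "integral\<^sup>L M (W B A n) \<le> 0" for n
    proof -
      have ik: "integrable M (\<lambda>\<omega>. indicator (B \<inter> C n k) \<omega> * (X (D n k) \<omega> - A))" for k
        using integrable_mult_indicator[OF C_M[OF B]
            Bochner_Integration.integrable_diff[OF X_int[OF D_nonneg] P.integrable_const]] by simp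
      have "integral\<^sup>L M (W B A n) = (\<Sum>k\<le>n * 2 ^ n. \<integral>\<omega>. indicator (B \<inter> C n k) \<omega> * (X (D n k) \<omega> - A) \<partial>M)"
        unfolding W_def by (rule Bochner_Integration.integral_sum) (rule ik)
      also have "\<dots> \<le> 0"
        by (intro sum_nonpos ce_le_imp[OF F_sf[OF D_nonneg] fin X_int[OF D_nonneg] BC_F[OF B] X_ce[OF D_nonneg]])
      finally show ?thesis .
    qed
    show ?thesis using lim each by (intro LIMSEQ_le_const2[OF lim]) auto
  qed
  have "AE \<omega> in M. real_cond_exp M G xt \<omega> \<le> A"
    by (rule ce_le_from[OF G_sf fin xt_int main])
  then show ?thesis unfolding G_def Fe_def xt_def .
qed

end
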